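(* Let $\mathcal{G}$ be a graph of groups over $Y$ and let $w=g_0y_1g_1\cdots y_ng_n$ be a Britton-reduced $\mathcal{G}$-factorization with $n\ge1$. Suppose $$y_{\lfloor n/2+1\rfloor}g_{\lfloor n/2+1\rfloor}\cdots y_ng_n\,g_0\,y_1g_1\cdots y_{\lfloor n/2\rfloor}g_{\lfloor n/2\rfloor}$$ rewrites by finitely many Britton reductions to a Britton-reduced word $\hat w$. Then $\hat w$ is cyclically Britton-reduced and $w$ and $\hat w$ are conjugate in $F(\mathcal{G})$.
   Context: A graph $Y$ (Serre) has vertices $V(Y)$, edges $E(Y)$, maps $\iota,\tau$ and a fixed-point-free involution $y\mapsto\bar y$ with $\iota(\bar y)=\tau(y)$. A graph of groups $\mathcal{G}$ assigns groups $G_a$ ($a\in V(Y)$), $G_y=G_{\bar y}$ ($y\in E(Y)$) and injective homomorphisms $G_y\to G_{\iota(y)}$, $c\mapsto c^y$. With $\Delta=E(Y)\cup\bigcup_a(G_a\setminus\{1\})$, $F(\mathcal{G})$ is $\Delta^*$ modulo $gh=[gh]$ ($g,h\in G_a$, product in $G_a$, $1$ = empty word), $\bar yy=1$ and $y\,c^{\bar y}\bar y=c^y$ ($c\in G_y$). A $\mathcal{G}$-factorization is a word $g_0y_1g_1\cdots y_ng_n$ with $\tau(y_i)=\iota(y_{i+1})$, $\tau(y_n)=\iota(y_1)$, $g_0\in G_{\iota(y_1)}$, $g_i\in G_{\tau(y_i)}$ (trivial $g_i$ omitted). Britton reductions are the rewriting rules $gh\to[gh]$ ($g,h\in G_a\setminus\{1\}$)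 and $y\,c^{\bar y}\,\bar y\to c^y$ ($y\in E(Y)$, $c\in G_y$). A word is Britton-reduced if no rule applies, and cyclically Britton-reduced if every cyclic permutation $u'u$ of it (where the word is $uu'$) is Britton-reduced. *)

theory Defs
  imports "HOL-Algebra.Group"
begin

record ('v, 'e, 'g, 'h) gog =
  verts :: "'v set"
  edges :: "'e set"
  src   :: "'e \<Rightarrow> 'v"
  tgt   :: "'e \<Rightarrow> 'v"
  rev   :: "'e \<Rightarrow> 'e"
  vgrp  :: "'v \<Rightarrow> 'g monoid"
  egrp  :: "'e \<Rightarrow> 'h monoid"
  emb   :: "'e \<Rightarrow> 'h \<Rightarrow> 'g"

definition graph_of_groups :: "('v, 'e, 'g, 'h) gog \<Rightarrow> bool" where
  "graph_of_groups \<Gamma> \<longleftrightarrow>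
     (\<forall>y\<in>edges \<Gamma>. rev \<Gamma> y \<in> edges \<Gamma> \<and> rev \<Gamma> (rev \<Gamma> y) = y \<and> rev \<Gamma> y \<noteq> y
        \<and> src \<Gamma> y \<in> verts \<Gamma> \<and> tgt \<Gamma> y \<in> verts \<Gamma> \<and> src \<Gamma> (rev \<Gamma> y) = tgt \<Gamma> y)
   \<and> (\<forall>a\<in>verts \<Gamma>. group (vgrp \<Gamma> a))
   \<and> (\<forall>y\<in>edges \<Gamma>. group (egrp \<Gamma> y) \<and> egrp \<Gamma> (rev \<Gamma> y) = egrp \<Gamma> y
        \<and> emb \<Gamma> y \<in> hom (egrp \<Gamma> y) (vgrp \<Gamma> (src \<Gamma> y))
        \<and> inj_on (emb \<Gamma> y) (carrier (egrp \<Gamma> y)))"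

text \<open>The alphabet Delta: edges, and nontrivial vertex-group elements tagged with their vertex.\<close>
datatype ('v, 'e, 'g) letter = Edge 'e | Elt 'v 'g

definition valid_letter :: "('v, 'e, 'g, 'h) gog \<Rightarrow> ('v, 'e, 'g) letter \<Rightarrow> bool" where
  "valid_letter \<Gamma> l = (case l of Edge y \<Rightarrow> y \<in> edges \<Gamma>
     | Elt a g \<Rightarrow> a \<in> verts \<Gamma> \<and> g \<in> carrier (vgrp \<Gamma> a) \<and> g \<noteq> \<one>\<^bsub>vgrp \<Gamma> a\<^esub>)"

definition valid_word :: "('v, 'e, 'g, 'h) gog \<Rightarrow> ('v, 'e, 'g) letter list \<Rightarrow> bool" where
  "valid_word \<Gamma> w = (\<forall>l\<in>set w. valid_letter \<Gamma> l)"

definition elt :: "('v, 'e, 'g, 'h) gog \<Rightarrow> 'v \<Rightarrow> 'g \<Rightarrow> ('v, 'e, 'g) letter list" where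
  "elt \<Gamma> a g = (if g = \<one>\<^bsub>vgrp \<Gamma> a\<^esub> then [] else [Elt a g])"

inductive fg_rel :: "('v, 'e, 'g, 'h) gog \<Rightarrow> ('v, 'e, 'g) letter list \<Rightarrow> ('v, 'e, 'g) letter list \<Rightarrow> bool"
  for \<Gamma> where
  mult: "\<lbrakk> a \<in> verts \<Gamma>; g \<in> carrier (vgrp \<Gamma> a); h \<in> carrier (vgrp \<Gamma> a) \<rbrakk>
     \<Longrightarrow> fg_rel \<Gamma> (elt \<Gamma> a g @ elt \<Gamma> a h) (elt \<Gamma> a (g \<otimes>\<^bsub>vgrp \<Gamma> a\<^esub> h))"
| inv_edge: "y \<in> edges \<Gamma> \<Longrightarrow> fg_rel \<Gamma> [Edge (rev \<Gamma> y), Edge y] []"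
| conj: "\<lbrakk> y \<in> edges \<Gamma>; c \<in> carrier (egrp \<Gamma> y) \<rbrakk>
     \<Longrightarrow> fg_rel \<Gamma> ([Edge y] @ elt \<Gamma> (tgt \<Gamma> y) (emb \<Gamma> (rev \<Gamma> y) c) @ [Edge (rev \<Gamma> y)])
                  (elt \<Gamma> (src \<Gamma> y) (emb \<Gamma> y c))"

inductive fg_eq :: "('v, 'e, 'g, 'h) gog \<Rightarrow> ('v, 'e, 'g) letter list \<Rightarrow> ('v, 'e, 'g) letter list \<Rightarrow> bool"
  for \<Gamma> where
  refl: "fg_eq \<Gamma> u u"
| sym: "fg_eq \<Gamma> u v \<Longrightarrow> fg_eq \<Gamma> v u"
| trans: "fg_eq \<Gamma> u v \<Longrightarrow> fg_eq \<Gamma> v w \<Longrightarrow> fg_eq \<Gamma> u w"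
| rel: "fg_rel \<Gamma> u v \<Longrightarrow> fg_eq \<Gamma> (p @ u @ q) (p @ v @ q)"

definition fg_conjugate :: "('v, 'e, 'g, 'h) gog \<Rightarrow> ('v, 'e, 'g) letter list \<Rightarrow> ('v, 'e, 'g) letter list \<Rightarrow> bool" where
  "fg_conjugate \<Gamma> u v \<longleftrightarrow> (\<exists>x x'. valid_word \<Gamma> x \<and> valid_word \<Gamma> x'
      \<and> fg_eq \<Gamma> (x @ x') [] \<and> fg_eq \<Gamma> (x' @ x) [] \<and> fg_eq \<Gamma> (x @ u @ x') v)"

inductive britton_step :: "('v, 'e, 'g, 'h) gog \<Rightarrow> ('v, 'e, 'g) letter list \<Rightarrow> ('v, 'e, 'g) letter list \<Rightarrow> bool"
  for \<Gamma> where
  mult: "\<lbrakk> a \<in> verts \<Gamma>; g \<in> carrier (vgrp \<Gamma> a); h \<in> carrier (vgrp \<Gamma> a);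
           g \<noteq> \<one>\<^bsub>vgrp \<Gamma> a\<^esub>; h \<noteq> \<one>\<^bsub>vgrp \<Gamma> a\<^esub> \<rbrakk>
     \<Longrightarrow> britton_step \<Gamma> (p @ [Elt a g, Elt a h] @ q) (p @ elt \<Gamma> a (g \<otimes>\<^bsub>vgrp \<Gamma> a\<^esub> h) @ q)"
| conj: "\<lbrakk> y \<in> edges \<Gamma>; c \<in> carrier (egrp \<Gamma> y) \<rbrakk>
     \<Longrightarrow> britton_step \<Gamma> (p @ [Edge y] @ elt \<Gamma> (tgt \<Gamma> y) (emb \<Gamma> (rev \<Gamma> y) c) @ [Edge (rev \<Gamma> y)] @ q)
                        (p @ elt \<Gamma> (src \<Gamma> y) (emb \<Gamma> y c) @ q)"

definition britton_reduced :: "('v, 'e, 'g, 'h) gog \<Rightarrow> ('v, 'e, 'g) letter list \<Rightarrow> bool" where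
  "britton_reduced \<Gamma> w \<longleftrightarrow> \<not> (\<exists>w'. britton_step \<Gamma> w w')"

definition cyc_britton_reduced :: "('v, 'e, 'g, 'h) gog \<Rightarrow> ('v, 'e, 'g) letter list \<Rightarrow> bool" where
  "cyc_britton_reduced \<Gamma> w \<longleftrightarrow> (\<forall>u u'. w = u @ u' \<longrightarrow> britton_reduced \<Gamma> (u' @ u))"

text \<open>g_0 y_1 g_1 ... y_n g_n, given by sequences y, g indexed by naturals.\<close>
definition is_factorization :: "('v, 'e, 'g, 'h) gog \<Rightarrow> nat \<Rightarrow> (nat \<Rightarrow> 'e) \<Rightarrow> (nat \<Rightarrow> 'g) \<Rightarrow> bool" where
  "is_factorization \<Gamma> n y g \<longleftrightarrow> 1 \<le> n
     \<and> (\<forall>i\<in>{1..n}. y i \<in> edges \<Gamma>)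
     \<and> (\<forall>i\<in>{1..<n}. tgt \<Gamma> (y i) = src \<Gamma> (y (Suc i)))
     \<and> tgt \<Gamma> (y n) = src \<Gamma> (y 1)
     \<and> g 0 \<in> carrier (vgrp \<Gamma> (src \<Gamma> (y 1)))
     \<and> (\<forall>i\<in>{1..n}. g i \<in> carrier (vgrp \<Gamma> (tgt \<Gamma> (y i))))"

definition seg_word :: "('v, 'e, 'g, 'h) gog \<Rightarrow> (nat \<Rightarrow> 'e) \<Rightarrow> (nat \<Rightarrow> 'g) \<Rightarrow> nat \<Rightarrow> nat \<Rightarrow> ('v, 'e, 'g) letter list" where
  "seg_word \<Gamma> y g i j = concat (map (\<lambda>k. Edge (y k) # elt \<Gamma> (tgt \<Gamma> (y k)) (g k)) [i..<Suc j])"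

definition fact_word :: "('v, 'e, 'g, 'h) gog \<Rightarrow> nat \<Rightarrow> (nat \<Rightarrow> 'e) \<Rightarrow> (nat \<Rightarrow> 'g) \<Rightarrow> ('v, 'e, 'g) letter list" where
  "fact_word \<Gamma> n y g = elt \<Gamma> (src \<Gamma> (y 1)) (g 0) @ seg_word \<Gamma> y g 1 n"

end

theory Submission
  imports Defs
begin


lemma straddle:
  assumes "p @ pat @ q = X @ Y"
  shows "(\<exists>q1. X = p @ pat @ q1 \<and> q = q1 @ Y) \<or> (\<exists>p1. Y = p1 @ pat @ q \<and> p = X @ p1)
     \<or> (\<exists>a b. pat = a @ b \<and> a \<noteq> [] \<and> b \<noteq> [] \<and> X = p @ a \<and> Y = b @ q)"
proof -
  from assms obtain us where
    c: "(p = X @ us \<and> us @ pat @ q = Y) \<or> (p @ us = X \<and> pat @ q = us @ Y)"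
    by (auto simp: append_eq_append_conv2)
  then show ?thesis
  proof
    assume "p = X @ us \<and> us @ pat @ q = Y" then show ?thesis by auto
  next
    assume h: "p @ us = X \<and> pat @ q = us @ Y"
    then obtain vs where
      d: "(pat = us @ vs \<and> vs @ q = Y) \<or> (pat @ vs = us \<and> q = vs @ Y)"
      by (auto simp: append_eq_append_conv2)
    then show ?thesis
    proof
      assume d1: "pat = us @ vs \<and> vs @ q = Y"
      show ?thesis
      proof (cases "us = []")
        case True then show ?thesis using h d1 by auto
      next
        case False
        show ?thesis
        proof (cases "vs = []")
          case True then show ?thesis using h d1 by auto
        next
          case F2: False
          then show ?thesis using h d1 False by blast
        qed
      qed
    next
      assume "pat @ vs = us \<and> q = vs @ Y" then show ?thesis using h by auto
    qed
  qed
qed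

lemma step_ctx: "britton_step \<Gamma> X Z \<Longrightarrow> britton_step \<Gamma> (p @ X @ q) (p @ Z @ q)"
proof (induction rule: britton_step.induct)
  case (mult a g h p' q')
  from britton_step.mult[OF mult, of "p @ p'" "q' @ q"] show ?case by simp
next
  case (conj y c p' q')
  from britton_step.conj[OF conj, of "p @ p'" "q' @ q"] show ?case by simp
qed

lemma reduced_sub: "britton_reduced \<Gamma> (p @ X @ q) \<Longrightarrow> britton_reduced \<Gamma> X"
  unfolding britton_reduced_def using step_ctx by blast

lemma fg_eq_ctx: "fg_eq \<Gamma> u v \<Longrightarrow> fg_eq \<Gamma> (p @ u @ q) (p @ v @ q)"
proof (induction rule: fg_eq.induct)
  case (refl u) then show ?case by (rule fg_eq.refl)
next
  case (sym u v) then show ?case by (simp add: fg_eq.sym)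
next
  case (trans u v w) then show ?case by (metis fg_eq.trans)
next
  case (rel u v p' q')
  from fg_eq.rel[OF rel, of "p @ p'" "q' @ q"] show ?case by simp
qed

lemma step_fg: "britton_step \<Gamma> u v \<Longrightarrow> fg_eq \<Gamma> u v"
proof (induction rule: britton_step.induct)
  case (mult a g h p q)
  have "fg_rel \<Gamma> (elt \<Gamma> a g @ elt \<Gamma> a h) (elt \<Gamma> a (g \<otimes>\<^bsub>vgrp \<Gamma> a\<^esub> h))"
    using mult by (intro fg_rel.mult) auto
  moreover have "elt \<Gamma> a g @ elt \<Gamma> a h = [Elt a g, Elt a h]" using mult by (simp add: elt_def)
  ultimately show ?case using fg_eq.rel[of \<Gamma> "[Elt a g, Elt a h]" _ p q] by simp
next
  case (conj y c p q)
  then show ?case using fg_eq.rel[OF fg_rel.conj[OF conj], of p q] by simp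
qed

lemma steps_fg: "(britton_step \<Gamma>)\<^sup>*\<^sup>* u v \<Longrightarrow> fg_eq \<Gamma> u v"
proof (induction rule: rtranclp_induct)
  case base then show ?case by (rule fg_eq.refl)
next
  case (step v w) then show ?case using step_fg fg_eq.trans by metis
qed



fun inv_letter :: "('v, 'e, 'g, 'h) gog \<Rightarrow> ('v, 'e, 'g) letter \<Rightarrow> ('v, 'e, 'g) letter" where
  "inv_letter \<Gamma> (Edge e) = Edge (rev \<Gamma> e)"
| "inv_letter \<Gamma> (Elt a h) = Elt a (inv\<^bsub>vgrp \<Gamma> a\<^esub> h)"

definition invw where "invw \<Gamma> u = List.rev (map (inv_letter \<Gamma>) u)"

lemma fg_rel_eq: "fg_rel \<Gamma> u v \<Longrightarrow> fg_eq \<Gamma> u v"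
  using fg_eq.rel[of \<Gamma> u v "[]" "[]"] by simp

lemma inv_letter_ok:
  assumes G: "graph_of_groups \<Gamma>" and v: "valid_letter \<Gamma> l"
  shows "fg_eq \<Gamma> [l, inv_letter \<Gamma> l] [] \<and> fg_eq \<Gamma> [inv_letter \<Gamma> l, l] [] \<and> valid_letter \<Gamma> (inv_letter \<Gamma> l)"
proof (cases l)
  case (Edge e)
  with v have e: "e \<in> edges \<Gamma>" by (simp add: valid_letter_def)
  with G have r: "rev \<Gamma> e \<in> edges \<Gamma>" "rev \<Gamma> (rev \<Gamma> e) = e" by (auto simp: graph_of_groups_def)
  have 1: "fg_eq \<Gamma> [Edge (rev \<Gamma> e), Edge e] []" using e by (intro fg_rel_eq fg_rel.inv_edge)
  have 2: "fg_eq \<Gamma> [Edge e, Edge (rev \<Gamma> e)] []" using fg_rel_eq[OF fg_rel.inv_edge[OF r(1)]] r(2) by simp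
  show ?thesis using Edge 1 2 r by (simp add: valid_letter_def)
next
  case (Elt a h)
  with v have a: "a \<in> verts \<Gamma>" "h \<in> carrier (vgrp \<Gamma> a)" "h \<noteq> \<one>\<^bsub>vgrp \<Gamma> a\<^esub>"
    by (auto simp: valid_letter_def)
  with G have grp: "group (vgrp \<Gamma> a)" by (auto simp: graph_of_groups_def)
  let ?i = "inv\<^bsub>vgrp \<Gamma> a\<^esub> h"
  have ic: "?i \<in> carrier (vgrp \<Gamma> a)" using grp a by (simp add: group.inv_closed)
  have i1: "?i \<noteq> \<one>\<^bsub>vgrp \<Gamma> a\<^esub>" using grp a by (metis group.inv_eq_1_iff)
  have p1: "h \<otimes>\<^bsub>vgrp \<Gamma> a\<^esub> ?i = \<one>\<^bsub>vgrp \<Gamma> a\<^esub>" using grp a by (simp add: group.r_inv)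
  have p2: "?i \<otimes>\<^bsub>vgrp \<Gamma> a\<^esub> h = \<one>\<^bsub>vgrp \<Gamma> a\<^esub>" using grp a by (simp add: group.l_inv)
  have 1: "fg_eq \<Gamma> [Elt a h, Elt a ?i] []"
    using fg_rel_eq[OF fg_rel.mult[OF a(1) a(2) ic]] p1 a i1 by (simp add: elt_def)
  have 2: "fg_eq \<Gamma> [Elt a ?i, Elt a h] []"
    using fg_rel_eq[OF fg_rel.mult[OF a(1) ic a(2)]] p2 a i1 by (simp add: elt_def)
  show ?thesis using Elt 1 2 a ic i1 by (simp add: valid_letter_def)
qed

lemma fg_eq_trans: "fg_eq \<Gamma> u v \<Longrightarrow> fg_eq \<Gamma> v w \<Longrightarrow> fg_eq \<Gamma> u w"
  by (rule fg_eq.trans)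

lemma invw_ok:
  assumes G: "graph_of_groups \<Gamma>"
  shows "valid_word \<Gamma> u \<Longrightarrow> fg_eq \<Gamma> (u @ invw \<Gamma> u) [] \<and> fg_eq \<Gamma> (invw \<Gamma> u @ u) [] \<and> valid_word \<Gamma> (invw \<Gamma> u)"
proof (induction u)
  case Nil then show ?case by (simp add: invw_def valid_word_def fg_eq.refl)
next
  case (Cons l u)
  then have vl: "valid_letter \<Gamma> l" and vu: "valid_word \<Gamma> u" by (auto simp: valid_word_def)
  from Cons.IH[OF vu] have IH: "fg_eq \<Gamma> (u @ invw \<Gamma> u) []" "fg_eq \<Gamma> (invw \<Gamma> u @ u) []"
    "valid_word \<Gamma> (invw \<Gamma> u)" by auto
  note L = inv_letter_ok[OF G vl]
  have iw: "invw \<Gamma> (l # u) = invw \<Gamma> u @ [inv_letter \<Gamma> l]" by (simp add: invw_def)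
  have a: "fg_eq \<Gamma> ((l # u) @ invw \<Gamma> (l # u)) [l, inv_letter \<Gamma> l]"
    using fg_eq_ctx[OF IH(1), of "[l]" "[inv_letter \<Gamma> l]"] iw by simp
  have b: "fg_eq \<Gamma> (invw \<Gamma> (l # u) @ (l # u)) (invw \<Gamma> u @ u)"
    using fg_eq_ctx[OF conjunct1[OF conjunct2[OF L]], of "invw \<Gamma> u" u] iw by simp
  show ?case using a b L IH iw by (auto simp: valid_word_def intro: fg_eq_trans)
qed



lemma seg_empty: "j < i \<Longrightarrow> seg_word \<Gamma> y g i j = []"
  by (simp add: seg_word_def)

lemma seg_cons: "i \<le> j \<Longrightarrow> seg_word \<Gamma> y g i j = Edge (y i) # elt \<Gamma> (tgt \<Gamma> (y i)) (g i) @ seg_word \<Gamma> y g (Suc i) j"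
proof -
  assume "i \<le> j"
  then have "[i..<Suc j] = i # [Suc i..<Suc j]" by (simp add: upt_conv_Cons)
  then show ?thesis by (simp add: seg_word_def)
qed

lemma seg_split: "i \<le> Suc k \<Longrightarrow> k \<le> j \<Longrightarrow> seg_word \<Gamma> y g i j = seg_word \<Gamma> y g i k @ seg_word \<Gamma> y g (Suc k) j"
proof -
  assume a: "i \<le> Suc k" "k \<le> j"
  have "[i..<Suc j] = [i..<Suc k] @ [Suc k..<Suc j]"
    using a upt_add_eq_append[of i "Suc k" "j - k"] by simp
  then show ?thesis by (simp add: seg_word_def)
qed

lemma seg_snoc: "1 \<le> i \<Longrightarrow> i \<le> j \<Longrightarrow> seg_word \<Gamma> y g i j = seg_word \<Gamma> y g i (j - 1) @ [Edge (y j)] @ elt \<Gamma> (tgt \<Gamma> (y j)) (g j)"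
proof -
  assume a: "i \<le> j" "1 \<le> i"
  show ?thesis
  proof (cases j)
    case 0 with a show ?thesis by (simp add: seg_word_def)
  next
    case (Suc j') with a show ?thesis by (simp add: seg_word_def upt_Suc_append)
  qed
qed

lemma elt_cases: "elt \<Gamma> a h = [] \<or> (elt \<Gamma> a h = [Elt a h] \<and> h \<noteq> \<one>\<^bsub>vgrp \<Gamma> a\<^esub>)"
  by (simp add: elt_def)



lemma two_split: "a1 @ b1 = [x1, x2] \<Longrightarrow> a1 \<noteq> [] \<Longrightarrow> b1 \<noteq> [] \<Longrightarrow> a1 = [x1] \<and> b1 = [x2]"
  by (cases a1) (auto simp: append_eq_Cons_conv)

definition allElt :: "('v, 'e, 'g) letter list \<Rightarrow> bool" where
  "allElt xs = (\<forall>l\<in>set xs. \<exists>a h. l = Elt a h)"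

lemma allElt_elt[simp]: "allElt (elt \<Gamma> a h)" by (simp add: allElt_def elt_def)

lemma MB_split:
  assumes "M @ B = e @ Edge z # q" "allElt M" "allElt e" "B = [] \<or> (\<exists>z' q'. B = Edge z' # q')"
  shows "M = e \<and> B = Edge z # q"
proof -
  from assms(1) obtain us where
    c: "(M = e @ us \<and> us @ B = Edge z # q) \<or> (M @ us = e \<and> B = us @ Edge z # q)"
    by (auto simp: append_eq_append_conv2)
  then show ?thesis
  proof
    assume h: "M = e @ us \<and> us @ B = Edge z # q"
    show ?thesis
    proof (cases us)
      case Nil then show ?thesis using h by simp
    next
      case (Cons u us')
      then have "u = Edge z" "u \<in> set M" using h by auto
      then show ?thesis using assms(2) by (auto simp: allElt_def)
    qed
  next
    assume h: "M @ us = e \<and> B = us @ Edge z # q"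
    show ?thesis
    proof (cases us)
      case Nil then show ?thesis using h by simp
    next
      case (Cons u us')
      then have "u \<in> set e" "hd B = u" using h by auto
      then show ?thesis using assms(3,4) h Cons by (auto simp: allElt_def)
    qed
  qed
qed

lemma pat3_split:
  assumes "a1 @ b1 = [Edge z] @ e @ [Edge z2]" "a1 \<noteq> []" "b1 \<noteq> []" "allElt e" "length e \<le> 1"
    and "\<exists>p z'. a1 = p @ [Edge z']"
  shows "a1 = [Edge z] \<and> b1 = e @ [Edge z2]"
proof (cases e)
  case Nil
  then have "a1 @ b1 = [Edge z, Edge z2]" using assms(1) by simp
  then show ?thesis using Nil two_split[of a1 b1] assms(2,3) by simp
next
  case (Cons x e')
  have e: "e = [x]" using Cons assms(5) by (cases e') simp_all
  from assms(4) e obtain a h where x: "x = Elt a h" by (auto simp: allElt_def)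
  obtain p z' where a1: "a1 = p @ [Edge z']" using assms(6) by blast
  have eq: "p @ Edge z' # b1 = [Edge z, Elt a h, Edge z2]" using assms(1) e x a1 by simp
  show ?thesis
  proof (cases p)
    case Nil then show ?thesis using eq a1 e x by simp
  next
    case (Cons p1 p')
    then have "p' @ Edge z' # b1 = [Elt a h, Edge z2]" using eq by simp
    then have "False"
    proof (cases p')
      case Nil then show False using \<open>p' @ Edge z' # b1 = [Elt a h, Edge z2]\<close> by simp
    next
      case (Cons q p'')
      then have "p'' @ Edge z' # b1 = [Edge z2]" using \<open>p' @ Edge z' # b1 = [Elt a h, Edge z2]\<close> by simp
      then show False using assms(3) by (cases p'') auto
    qed
    then show ?thesis ..
  qed
qed

locale LL =
  fixes \<Gamma> :: "('v, 'e, 'g, 'h) gog" and n :: nat and y :: "nat \<Rightarrow> 'e" and g :: "nat \<Rightarrow> 'g"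
  assumes gog: "graph_of_groups \<Gamma>" and fac: "is_factorization \<Gamma> n y g"
    and red: "britton_reduced \<Gamma> (fact_word \<Gamma> n y g)"
begin

abbreviation "m \<equiv> n div 2"
abbreviation "seg \<equiv> seg_word \<Gamma> y g"

definition "A k = (if m + 1 \<le> n - k then seg (m + 1) (n - k - 1) @ [Edge (y (n - k))] else [])"
definition "B k = seg (k + 1) m"
definition "goodM M \<longleftrightarrow> (\<exists>v. v \<in> verts \<Gamma> \<and> (\<forall>l\<in>set M. \<exists>h. l = Elt v h \<and> h \<in> carrier (vgrp \<Gamma> v) \<and> h \<noteq> \<one>\<^bsub>vgrp \<Gamma> v\<^esub>))"
definition "st W \<longleftrightarrow> (\<exists>k M. k \<le> m \<and> goodM M \<and> W = A k @ M @ B k)"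

lemma n1: "1 \<le> n" using fac by (simp add: is_factorization_def)
lemma mn: "m + 1 \<le> n" "m \<le> n - m" "n - m \<le> m + 1" using n1 by auto

lemma yE: "1 \<le> i \<Longrightarrow> i \<le> n \<Longrightarrow> y i \<in> edges \<Gamma>" using fac by (auto simp: is_factorization_def)
lemma yT: "1 \<le> i \<Longrightarrow> i < n \<Longrightarrow> tgt \<Gamma> (y i) = src \<Gamma> (y (Suc i))" using fac by (auto simp: is_factorization_def)
lemma gC: "1 \<le> i \<Longrightarrow> i \<le> n \<Longrightarrow> g i \<in> carrier (vgrp \<Gamma> (tgt \<Gamma> (y i)))" using fac by (auto simp: is_factorization_def)
lemma wrap: "tgt \<Gamma> (y n) = src \<Gamma> (y 1)" "g 0 \<in> carrier (vgrp \<Gamma> (src \<Gamma> (y 1)))"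
  using fac by (auto simp: is_factorization_def)

lemma E: assumes "z \<in> edges \<Gamma>"
  shows "rev \<Gamma> z \<in> edges \<Gamma>" "rev \<Gamma> (rev \<Gamma> z) = z" "src \<Gamma> z \<in> verts \<Gamma>" "tgt \<Gamma> z \<in> verts \<Gamma>"
    "src \<Gamma> (rev \<Gamma> z) = tgt \<Gamma> z" "tgt \<Gamma> (rev \<Gamma> z) = src \<Gamma> z"
    "emb \<Gamma> z \<in> hom (egrp \<Gamma> z) (vgrp \<Gamma> (src \<Gamma> z))" "egrp \<Gamma> (rev \<Gamma> z) = egrp \<Gamma> z"
proof -
  have all: "\<forall>y\<in>edges \<Gamma>. rev \<Gamma> y \<in> edges \<Gamma> \<and> rev \<Gamma> (rev \<Gamma> y) = y \<and> rev \<Gamma> y \<noteq> y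
        \<and> src \<Gamma> y \<in> verts \<Gamma> \<and> tgt \<Gamma> y \<in> verts \<Gamma> \<and> src \<Gamma> (rev \<Gamma> y) = tgt \<Gamma> y"
   "\<forall>y\<in>edges \<Gamma>. group (egrp \<Gamma> y) \<and> egrp \<Gamma> (rev \<Gamma> y) = egrp \<Gamma> y
        \<and> emb \<Gamma> y \<in> hom (egrp \<Gamma> y) (vgrp \<Gamma> (src \<Gamma> y))"
    using gog by (auto simp: graph_of_groups_def)
  show "rev \<Gamma> z \<in> edges \<Gamma>" "rev \<Gamma> (rev \<Gamma> z) = z" "src \<Gamma> z \<in> verts \<Gamma>" "tgt \<Gamma> z \<in> verts \<Gamma>"
    "src \<Gamma> (rev \<Gamma> z) = tgt \<Gamma> z" "emb \<Gamma> z \<in> hom (egrp \<Gamma> z) (vgrp \<Gamma> (src \<Gamma> z))" "egrp \<Gamma> (rev \<Gamma> z) = egrp \<Gamma> z"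
    using all assms by auto
  have r: "rev \<Gamma> z \<in> edges \<Gamma>" "rev \<Gamma> (rev \<Gamma> z) = z" using all assms by auto
  from all(1) r(1) have "src \<Gamma> (rev \<Gamma> (rev \<Gamma> z)) = tgt \<Gamma> (rev \<Gamma> z)" by blast
  then show "tgt \<Gamma> (rev \<Gamma> z) = src \<Gamma> z" using r(2) by simp
qed

lemma grpV: "v \<in> verts \<Gamma> \<Longrightarrow> group (vgrp \<Gamma> v)" using gog by (auto simp: graph_of_groups_def)

lemma w_eq: "fact_word \<Gamma> n y g = elt \<Gamma> (src \<Gamma> (y 1)) (g 0) @ seg 1 m @ seg (m + 1) n"
  using seg_split[of 1 m n \<Gamma> y g] mn by (simp add: fact_word_def)

lemma A_red: "britton_reduced \<Gamma> (A k)"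
proof (cases "m + 1 \<le> n - k")
  case True
  have "seg (m + 1) n = seg (m + 1) (n - k - 1) @ seg (Suc (n - k - 1)) n"
    using True by (intro seg_split) auto
  also have "seg (Suc (n - k - 1)) n = Edge (y (n - k)) # elt \<Gamma> (tgt \<Gamma> (y (n-k))) (g (n-k)) @ seg (Suc (n - k)) n"
    using True seg_cons[of "n-k" n] by (simp add: Suc_diff_Suc)
  finally have "fact_word \<Gamma> n y g = (elt \<Gamma> (src \<Gamma> (y 1)) (g 0) @ seg 1 m) @ A k @ (elt \<Gamma> (tgt \<Gamma> (y (n-k))) (g (n-k)) @ seg (Suc (n - k)) n)"
    using True by (simp add: w_eq A_def)
  then show ?thesis using red reduced_sub by metis
next
  case False
  then have "A k = []" by (simp add: A_def)
  moreover have "\<not> britton_step \<Gamma> [] Z" for Z by (auto elim: britton_step.cases)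
  ultimately show ?thesis by (simp add: britton_reduced_def)
qed

lemma B_red: "k \<le> m \<Longrightarrow> britton_reduced \<Gamma> (B k)"
proof -
  assume k: "k \<le> m"
  have "seg 1 m = seg 1 k @ seg (Suc k) m" using k by (intro seg_split) auto
  then have "fact_word \<Gamma> n y g = (elt \<Gamma> (src \<Gamma> (y 1)) (g 0) @ seg 1 k) @ B k @ seg (m + 1) n"
    by (simp add: w_eq B_def)
  then show ?thesis using red reduced_sub by metis
qed

lemma A_shape: "A k = [] \<or> (\<exists>p z. A k = p @ [Edge z])" by (auto simp: A_def)
lemma B_shape: "B k = [] \<or> (\<exists>z q. B k = Edge z # q)"
proof (cases "k + 1 \<le> m")
  case True then show ?thesis unfolding B_def using seg_cons[of "k+1" m \<Gamma> y g] by simp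
next
  case False then show ?thesis unfolding B_def using seg_empty[of m "k+1" \<Gamma> y g] by simp
qed
lemma AB_empty: "k \<le> m \<Longrightarrow> A k = [] \<Longrightarrow> B k = []"
proof -
  assume k: "k \<le> m" "A k = []"
  then have "\<not> m + 1 \<le> n - k" by (auto simp: A_def split: if_splits)
  then have "m < k + 1" using mn k by linarith
  then show ?thesis by (simp add: B_def seg_empty)
qed

lemma goodM_allElt: "goodM M \<Longrightarrow> allElt M" by (auto simp: goodM_def allElt_def)

end


context LL begin

lemma goodM_elts:
  assumes "v \<in> verts \<Gamma>" "a1 \<in> carrier (vgrp \<Gamma> v)" "a2 \<in> carrier (vgrp \<Gamma> v)" "a3 \<in> carrier (vgrp \<Gamma> v)"
  shows "goodM (elt \<Gamma> v a1 @ elt \<Gamma> v a2 @ elt \<Gamma> v a3)"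
  using assms unfolding goodM_def by (intro exI[of _ v]) (auto simp: elt_def)

lemma step_mult:
  assumes k: "k \<le> m" "goodM M" and W: "p @ [Elt a g1, Elt a h1] @ q = A k @ M @ B k"
    and a: "a \<in> verts \<Gamma>" "g1 \<in> carrier (vgrp \<Gamma> a)" "h1 \<in> carrier (vgrp \<Gamma> a)"
      "g1 \<noteq> \<one>\<^bsub>vgrp \<Gamma> a\<^esub>" "h1 \<noteq> \<one>\<^bsub>vgrp \<Gamma> a\<^esub>"
  shows "st (p @ elt \<Gamma> a (g1 \<otimes>\<^bsub>vgrp \<Gamma> a\<^esub> h1) @ q)"
proof -
  let ?pat = "[Elt a g1, Elt a h1]"
  let ?r = "elt \<Gamma> a (g1 \<otimes>\<^bsub>vgrp \<Gamma> a\<^esub> h1)"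
  have stp: "\<And>p' q'. britton_step \<Gamma> (p' @ ?pat @ q') (p' @ ?r @ q')"
    using a by (rule britton_step.mult)
  from straddle[OF W] show ?thesis
  proof (elim disjE exE conjE)
    fix q1 assume "A k = p @ ?pat @ q1"
    then show ?thesis using A_red[of k] stp unfolding britton_reduced_def by metis
  next
    fix p1 assume h: "M @ B k = p1 @ ?pat @ q" "p = A k @ p1"
    from straddle[OF h(1)[symmetric]] show ?thesis
    proof (elim disjE exE conjE)
      fix q1 assume h2: "M = p1 @ ?pat @ q1" "q = q1 @ B k"
      from k(2) obtain v where v: "v \<in> verts \<Gamma>"
        "\<forall>l\<in>set M. \<exists>h. l = Elt v h \<and> h \<in> carrier (vgrp \<Gamma> v) \<and> h \<noteq> \<one>\<^bsub>vgrp \<Gamma> v\<^esub>"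
        unfolding goodM_def by blast
      have av: "a = v" using v(2) h2(1) by auto
      have gm: "g1 \<otimes>\<^bsub>vgrp \<Gamma> a\<^esub> h1 \<in> carrier (vgrp \<Gamma> a)"
        using grpV[OF a(1)] a by (simp add: group.is_monoid monoid.m_closed)
      have "goodM (p1 @ ?r @ q1)"
        unfolding goodM_def using v h2(1) gm av by (intro exI[of _ v]) (auto simp: elt_def)
      moreover have "p @ ?r @ q = A k @ (p1 @ ?r @ q1) @ B k" using h h2 by simp
      ultimately show ?thesis using k(1) unfolding st_def by blast
    next
      fix p2 assume "B k = p2 @ ?pat @ q"
      then show ?thesis using B_red[OF k(1)] stp unfolding britton_reduced_def by metis
    next
      fix a1 b1 assume h2: "?pat = a1 @ b1" "a1 \<noteq> []" "b1 \<noteq> []" "M = p1 @ a1" "B k = b1 @ q"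
      then have "b1 = [Elt a h1]" using two_split by metis
      then show ?thesis using B_shape[of k] h2 by auto
    qed
  next
    fix a1 b1 assume h2: "?pat = a1 @ b1" "a1 \<noteq> []" "b1 \<noteq> []" "A k = p @ a1" "M @ B k = b1 @ q"
    then have "a1 = [Elt a g1]" using two_split by metis
    then show ?thesis using A_shape[of k] h2 by auto
  qed
qed


lemma step_conj:
  assumes k: "k \<le> m" "goodM M"
    and W: "p @ [Edge z] @ elt \<Gamma> (tgt \<Gamma> z) (emb \<Gamma> (rev \<Gamma> z) c) @ [Edge (rev \<Gamma> z)] @ q = A k @ M @ B k"
    and z: "z \<in> edges \<Gamma>" "c \<in> carrier (egrp \<Gamma> z)"
  shows "st (p @ elt \<Gamma> (src \<Gamma> z) (emb \<Gamma> z c) @ q)"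
proof -
  let ?e = "elt \<Gamma> (tgt \<Gamma> z) (emb \<Gamma> (rev \<Gamma> z) c)"
  let ?pat = "[Edge z] @ ?e @ [Edge (rev \<Gamma> z)]"
  let ?r = "elt \<Gamma> (src \<Gamma> z) (emb \<Gamma> z c)"
  have stp: "\<And>p' q'. britton_step \<Gamma> (p' @ ?pat @ q') (p' @ ?r @ q')"
    using britton_step.conj[OF z] by simp
  have W': "p @ ?pat @ q = A k @ (M @ B k)" using W by simp
  have noE: "Edge z \<notin> set M" using goodM_allElt[OF k(2)] by (auto simp: allElt_def)
  from straddle[OF W'] show ?thesis
  proof (elim disjE exE conjE)
    fix q1 assume "A k = p @ ?pat @ q1"
    then show ?thesis using A_red[of k] stp unfolding britton_reduced_def by metis
  next
    fix p1 assume h: "M @ B k = p1 @ ?pat @ q" "p = A k @ p1"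
    from straddle[OF h(1)[symmetric]] show ?thesis
    proof (elim disjE exE conjE)
      fix q1 assume "M = p1 @ ?pat @ q1"
      then show ?thesis using noE by simp
    next
      fix p2 assume "B k = p2 @ ?pat @ q"
      then show ?thesis using B_red[OF k(1)] stp unfolding britton_reduced_def by metis
    next
      fix a1 b1 assume h2: "?pat = a1 @ b1" "a1 \<noteq> []" "M = p1 @ a1"
      then have "hd a1 = Edge z" by (cases a1) auto
      then have "Edge z \<in> set a1" using h2(2) by (metis hd_in_set)
      then show ?thesis using h2(3) noE by simp
    qed
  next
    fix a1 b1 assume h2: "?pat = a1 @ b1" "a1 \<noteq> []" "b1 \<noteq> []" "A k = p @ a1" "M @ B k = b1 @ q"
    have Ane: "A k \<noteq> []" using h2 by simp
    then obtain p0 z0 where A0: "A k = p0 @ [Edge z0]" using A_shape[of k] by blast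
    have "last a1 = Edge z0" using h2(2,4) A0 by (metis last_appendR last_snoc)
    then have ex: "\<exists>p z'. a1 = p @ [Edge z']" using h2(2) by (metis append_butlast_last_id)
    have le: "length ?e \<le> 1" by (simp add: elt_def)
    note ab0 = pat3_split[OF h2(1)[symmetric] h2(2,3) allElt_elt le ex]
    have ab: "a1 = [Edge z]" "b1 = ?e @ [Edge (rev \<Gamma> z)]" using ab0 by simp_all
    have "M @ B k = ?e @ Edge (rev \<Gamma> z) # q" using h2(5) ab by simp
    from MB_split[OF this goodM_allElt[OF k(2)] allElt_elt B_shape]
    have MB: "M = ?e" "B k = Edge (rev \<Gamma> z) # q" by auto
    have km: "k < m"
    proof (rule ccontr)
      assume "\<not> k < m" then have "m < k+1" by simp
      then have "B k = []" by (simp add: B_def seg_empty)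
      with MB(2) show False by simp
    qed
    have km1: "k + 1 \<le> m" using km by simp
    have Bk: "B k = Edge (y (k+1)) # elt \<Gamma> (tgt \<Gamma> (y (k+1))) (g (k+1)) @ B (k+1)"
      using km seg_cons[of "k+1" m \<Gamma> y g] by (simp add: B_def)
    have rz: "rev \<Gamma> z = y (k+1)" and q: "q = elt \<Gamma> (tgt \<Gamma> (y (k+1))) (g (k+1)) @ B (k+1)"
      using Bk MB(2) by auto
    have nk: "m + 1 \<le> n - k" using km mn by linarith
    then have Ak: "A k = seg (m + 1) (n - k - 1) @ [Edge (y (n - k))]" by (simp add: A_def)
    then have pz: "p = seg (m + 1) (n - k - 1)" "z = y (n - k)" using h2(4) ab by auto
    have ze: "z \<in> edges \<Gamma>" by (rule z(1))
    have vz: "src \<Gamma> z \<in> verts \<Gamma>" using E(3)[OF ze] .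
    have rc: "emb \<Gamma> z c \<in> carrier (vgrp \<Gamma> (src \<Gamma> z))" using E(7)[OF ze] z(2) by (rule hom_in_carrier)
    have t1: "tgt \<Gamma> (y (k+1)) = src \<Gamma> z" using E(6)[OF ze] rz by simp
    have g1: "g (k+1) \<in> carrier (vgrp \<Gamma> (src \<Gamma> z))" using gC[of "k+1"] t1 km mn by simp
    show ?thesis
    proof (cases "m + 1 \<le> n - k - 1")
      case True
      let ?j = "n - k - 1"
      have s: "seg (m+1) ?j = seg (m+1) (?j - 1) @ [Edge (y ?j)] @ elt \<Gamma> (tgt \<Gamma> (y ?j)) (g ?j)"
        by (rule seg_snoc) (use True in auto)
      have e1: "n - (k+1) = ?j" by simp
      have A1: "A (k+1) = seg (m+1) (?j - 1) @ [Edge (y ?j)]"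
        unfolding A_def e1 using True by simp
      have p2: "p = A (k+1) @ elt \<Gamma> (tgt \<Gamma> (y ?j)) (g ?j)"
        using pz(1) s A1 by simp
      have sj: "Suc ?j = n - k" using nk by arith
      have j1: "1 \<le> ?j" "?j < n" using True nk by arith+
      have t2: "tgt \<Gamma> (y ?j) = src \<Gamma> z" using yT[OF j1] sj pz(2) by simp
      have g2: "g ?j \<in> carrier (vgrp \<Gamma> (src \<Gamma> z))" using gC[of ?j] t2 True by simp
      have "p @ ?r @ q = A (k+1) @ (elt \<Gamma> (src \<Gamma> z) (g ?j) @ ?r @ elt \<Gamma> (src \<Gamma> z) (g (k+1))) @ B (k+1)"
        using p2 q t1 t2 by simp
      moreover have "goodM (elt \<Gamma> (src \<Gamma> z) (g ?j) @ ?r @ elt \<Gamma> (src \<Gamma> z) (g (k+1)))"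
        using goodM_elts[OF vz g2 rc g1] .
      ultimately show ?thesis using km1 unfolding st_def by blast
    next
      case False
      have p2: "p = []" using pz(1) False by (simp add: seg_empty)
      have A1: "A (k+1) = []" using False by (simp add: A_def)
      have one: "\<one>\<^bsub>vgrp \<Gamma> (src \<Gamma> z)\<^esub> \<in> carrier (vgrp \<Gamma> (src \<Gamma> z))"
        using grpV[OF vz] by (simp add: group.is_monoid monoid.one_closed)
      have "p @ ?r @ q = A (k+1) @ (elt \<Gamma> (src \<Gamma> z) \<one>\<^bsub>vgrp \<Gamma> (src \<Gamma> z)\<^esub> @ ?r @ elt \<Gamma> (src \<Gamma> z) (g (k+1))) @ B (k+1)"
        using p2 A1 q t1 by (simp add: elt_def)
      moreover have "goodM (elt \<Gamma> (src \<Gamma> z) \<one>\<^bsub>vgrp \<Gamma> (src \<Gamma> z)\<^esub> @ ?r @ elt \<Gamma> (src \<Gamma> z) (g (k+1)))"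
        using goodM_elts[OF vz one rc g1] .
      ultimately show ?thesis using km1 unfolding st_def by blast
    qed
  qed
qed

end


fun isE :: "('v, 'e, 'g) letter \<Rightarrow> bool" where
  "isE (Edge _) = True" | "isE (Elt _ _) = False"

definition cE :: "('v, 'e, 'g) letter list \<Rightarrow> nat" where "cE l = length (filter isE l)"
definition cV :: "('v, 'e, 'g) letter list \<Rightarrow> nat" where "cV l = length (filter (\<lambda>x. \<not> isE x) l)"

lemma step_counts: "britton_step \<Gamma> W Z \<Longrightarrow> 2 \<le> cE W \<or> 2 \<le> cV W"
  by (erule britton_step.cases) (auto simp: cE_def cV_def)

lemma pat3_split2:
  assumes "a1 @ b1 = [Edge z] @ e @ [Edge z2]" "a1 \<noteq> []" "b1 \<noteq> []" "allElt e" "length e \<le> 1"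
    and "\<exists>z' r. b1 = Edge z' # r"
  shows "a1 = [Edge z] @ e \<and> b1 = [Edge z2]"
proof (cases e)
  case Nil
  then have "a1 @ b1 = [Edge z, Edge z2]" using assms(1) by simp
  then show ?thesis using Nil two_split[of a1 b1] assms(2,3) by simp
next
  case (Cons x e')
  have e: "e = [x]" using Cons assms(5) by (cases e') simp_all
  from assms(4) e obtain a h where x: "x = Elt a h" by (auto simp: allElt_def)
  obtain z' r where b1: "b1 = Edge z' # r" using assms(6) by blast
  have eq: "a1 @ Edge z' # r = [Edge z, Elt a h, Edge z2]" using assms(1) e x b1 by simp
  show ?thesis
  proof (cases a1)
    case Nil then show ?thesis using assms(2) by simp
  next
    case (Cons a0 a1')
    then have eq2: "a1' @ Edge z' # r = [Elt a h, Edge z2]" using eq by simp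
    show ?thesis
    proof (cases a1')
      case Nil then show ?thesis using eq2 by simp
    next
      case (Cons b a1'')
      then have "a1'' @ Edge z' # r = [Edge z2]" using eq2 by simp
      then have "a1'' = []" "r = []" "z' = z2" by (cases a1''; simp)+
      then show ?thesis using eq Cons \<open>a1 = a0 # a1'\<close> b1 e x by simp
    qed
  qed
qed

lemma tail_match:
  assumes "X1 @ [Edge a] @ e1 = X2 @ [Edge b] @ e2" "allElt e1" "allElt e2" "length e1 \<le> 1" "length e2 \<le> 1"
  shows "a = b \<and> e1 = e2"
proof -
  have r: "List.rev e1 @ Edge a # List.rev X1 = List.rev e2 @ Edge b # List.rev X2"
    using arg_cong[OF assms(1), of List.rev] by simp
  consider "e1 = []" | x1 where "e1 = [x1]" using assms(4) by (cases e1) auto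
  then show ?thesis
  proof cases
    case 1
    then show ?thesis
    proof (cases e2)
      case Nil then show ?thesis using r 1 by simp
    next
      case (Cons x2 e2')
      then have "e2 = [x2]" using assms(5) by (cases e2') auto
      then show ?thesis using r 1 assms(3) by (auto simp: allElt_def)
    qed
  next
    case 2
    then show ?thesis
    proof (cases e2)
      case Nil then show ?thesis using r 2 assms(2) by (auto simp: allElt_def)
    next
      case (Cons x2 e2')
      then have "e2 = [x2]" using assms(5) by (cases e2') auto
      then show ?thesis using r 2 by simp
    qed
  qed
qed

context LL begin

lemma step_st: assumes "st W" "britton_step \<Gamma> W Z" shows "st Z"
proof -
  obtain k M where k: "k \<le> m" "goodM M" "W = A k @ M @ B k" using assms(1) unfolding st_def by blast
  from assms(2) show ?thesis
  proof cases
    case (mult a g1 h1 p q)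
    then show ?thesis using step_mult[OF k(1,2), of p a g1 h1 q] k(3) by simp
  next
    case (conj z c p q)
    then show ?thesis using step_conj[OF k(1,2), of p z c q] k(3) by simp
  qed
qed

lemma reach_st: "(britton_step \<Gamma>)\<^sup>*\<^sup>* W Z \<Longrightarrow> st W \<Longrightarrow> st Z"
  by (induction rule: rtranclp_induct) (auto intro: step_st)

lemma init_st: "st (seg (m+1) n @ elt \<Gamma> (src \<Gamma> (y 1)) (g 0) @ seg 1 m)"
proof -
  have A0: "A 0 = seg (m+1) (n-1) @ [Edge (y n)]" using mn by (simp add: A_def)
  have s: "seg (m+1) n = seg (m+1) (n-1) @ [Edge (y n)] @ elt \<Gamma> (tgt \<Gamma> (y n)) (g n)"
    by (rule seg_snoc) (use mn in auto)
  have v: "src \<Gamma> (y 1) \<in> verts \<Gamma>" using E(3)[OF yE[of 1]] n1 by simp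
  have gn: "g n \<in> carrier (vgrp \<Gamma> (src \<Gamma> (y 1)))" using gC[of n] n1 wrap by simp
  have "goodM (elt \<Gamma> (src \<Gamma> (y 1)) (g n) @ elt \<Gamma> (src \<Gamma> (y 1)) (g 0))"
    unfolding goodM_def using v gn wrap(2) by (intro exI[of _ "src \<Gamma> (y 1)"]) (auto simp: elt_def)
  moreover have "seg (m+1) n @ elt \<Gamma> (src \<Gamma> (y 1)) (g 0) @ seg 1 m
      = A 0 @ (elt \<Gamma> (src \<Gamma> (y 1)) (g n) @ elt \<Gamma> (src \<Gamma> (y 1)) (g 0)) @ B 0"
    using s A0 wrap(1) by (simp add: B_def)
  ultimately show ?thesis unfolding st_def by blast
qed

end


context LL begin

lemma M_short:
  assumes "goodM M" "britton_reduced \<Gamma> (A k @ M @ B k)"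
  shows "length M \<le> 1"
proof (rule ccontr)
  assume "\<not> length M \<le> 1"
  then obtain x1 x2 r where M: "M = x1 # x2 # r" by (cases M; cases "tl M") auto
  from assms(1) obtain v where v: "v \<in> verts \<Gamma>"
    "\<forall>l\<in>set M. \<exists>h. l = Elt v h \<and> h \<in> carrier (vgrp \<Gamma> v) \<and> h \<noteq> \<one>\<^bsub>vgrp \<Gamma> v\<^esub>"
    unfolding goodM_def by blast
  then obtain h1 h2 where h: "x1 = Elt v h1" "x2 = Elt v h2" "h1 \<in> carrier (vgrp \<Gamma> v)" "h2 \<in> carrier (vgrp \<Gamma> v)"
    "h1 \<noteq> \<one>\<^bsub>vgrp \<Gamma> v\<^esub>" "h2 \<noteq> \<one>\<^bsub>vgrp \<Gamma> v\<^esub>" using M by force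
  have "britton_step \<Gamma> (A k @ [Elt v h1, Elt v h2] @ (r @ B k)) (A k @ elt \<Gamma> v (h1 \<otimes>\<^bsub>vgrp \<Gamma> v\<^esub> h2) @ (r @ B k))"
    using v(1) h by (intro britton_step.mult) auto
  then show False using assms(2) M h unfolding britton_reduced_def by auto
qed

lemma w_pinch:
  assumes "1 \<le> m" "rev \<Gamma> (y m) = y (m+1)"
  shows "\<exists>P0 Q0. fact_word \<Gamma> n y g = P0 @ [Edge (y m)] @ elt \<Gamma> (tgt \<Gamma> (y m)) (g m) @ [Edge (rev \<Gamma> (y m))] @ Q0"
proof -
  have s1: "seg 1 m = seg 1 (m-1) @ [Edge (y m)] @ elt \<Gamma> (tgt \<Gamma> (y m)) (g m)"
    by (rule seg_snoc) (use assms in auto)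
  have s2: "seg (m+1) n = Edge (y (m+1)) # elt \<Gamma> (tgt \<Gamma> (y (m+1))) (g (m+1)) @ seg (Suc (m+1)) n"
    by (rule seg_cons) (use mn in auto)
  show ?thesis using w_eq s1 s2 assms(2)
    by (intro exI[of _ "elt \<Gamma> (src \<Gamma> (y 1)) (g 0) @ seg 1 (m-1)"]
        exI[of _ "elt \<Gamma> (tgt \<Gamma> (y (m+1))) (g (m+1)) @ seg (Suc (m+1)) n"]) simp
qed

lemma final:
  assumes "st W" "britton_reduced \<Gamma> W"
  shows "cyc_britton_reduced \<Gamma> W"
  unfolding cyc_britton_reduced_def
proof (intro allI impI)
  fix u u' assume W: "W = u @ u'"
  obtain k M where k: "k \<le> m" "goodM M" "W = A k @ M @ B k" using assms(1) unfolding st_def by blast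
  have Ms: "length M \<le> 1" using M_short[OF k(2)] assms(2) k(3) by simp
  have aM: "allElt M" using goodM_allElt[OF k(2)] .
  have ru: "britton_reduced \<Gamma> u" using reduced_sub[of \<Gamma> "[]" u u'] assms(2) W by simp
  have ru': "britton_reduced \<Gamma> u'" using reduced_sub[of \<Gamma> u u' "[]"] assms(2) W by simp
  show "britton_reduced \<Gamma> (u' @ u)"
  proof (cases "k = m")
    case True
    have Bm: "B k = []" using True by (simp add: B_def seg_empty)
    have "A k = [] \<or> A k = [Edge (y (n - m))]"
    proof (cases "m + 1 \<le> n - m")
      case True2: True
      have "n - m - 1 < m + 1" using mn by linarith
      then show ?thesis using True True2 by (simp add: A_def seg_empty)
    next
      case False then show ?thesis using True by (simp add: A_def)
    qed
    moreover have "cV M \<le> 1" "cE M = 0"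
      using Ms aM by (auto simp: cV_def cE_def allElt_def length_filter_le[THEN le_trans] filter_empty_conv)
    ultimately have c: "cE W \<le> 1" "cV W \<le> 1" using k(3) Bm by (auto simp: cE_def cV_def)
    have "cE (u' @ u) = cE W" "cV (u' @ u) = cV W" using W by (simp_all add: cE_def cV_def)
    then show ?thesis using c step_counts unfolding britton_reduced_def by fastforce
  next
    case False
    then have km: "k < m" using k(1) by simp
    have nk: "m + 1 \<le> n - k" using km mn by linarith
    have Ak: "A k = seg (m + 1) (n - k - 1) @ [Edge (y (n - k))]" using nk by (simp add: A_def)
    have hdA: "\<exists>r. A k = Edge (y (m+1)) # r"
    proof (cases "m + 1 \<le> n - k - 1")
      case True then show ?thesis using Ak seg_cons[of "m+1" "n-k-1" \<Gamma> y g] by simp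
    next
      case False
      then have "n - k = m + 1" using nk by linarith
      then show ?thesis using Ak False by (simp add: seg_empty)
    qed
    then obtain r where hdW: "W = Edge (y (m+1)) # r" using k(3) by auto
    have Bk: "B k = seg (k+1) (m-1) @ [Edge (y m)] @ elt \<Gamma> (tgt \<Gamma> (y m)) (g m)"
      unfolding B_def by (rule seg_snoc) (use km in auto)
    obtain s where tlW: "W = s @ [Edge (y m)] @ elt \<Gamma> (tgt \<Gamma> (y m)) (g m)"
      using k(3) Bk by (intro that[of "A k @ M @ seg (k+1) (m-1)"]) simp
    show ?thesis
      unfolding britton_reduced_def
    proof
      assume "\<exists>Z. britton_step \<Gamma> (u' @ u) Z"
      then obtain Z where stp: "britton_step \<Gamma> (u' @ u) Z" by blast
      show False
      proof (cases "u = []")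
        case True then show ?thesis using stp assms(2) W unfolding britton_reduced_def by auto
      next
        case une: False
        have hdu: "hd u = Edge (y (m+1))" using hdW W une by (cases u) auto
        from stp show False
        proof cases
          case (mult a g1 h1 p q)
          have "p @ [Elt a g1, Elt a h1] @ q = u' @ u" using mult(1) by simp
          from straddle[OF this] show False
          proof (elim disjE exE conjE)
            fix q1 assume "u' = p @ [Elt a g1, Elt a h1] @ q1"
            then show False using ru' britton_step.mult[OF mult(3-7)] unfolding britton_reduced_def by metis
          next
            fix p1 assume "u = p1 @ [Elt a g1, Elt a h1] @ q"
            then show False using ru britton_step.mult[OF mult(3-7)] unfolding britton_reduced_def by metis
          next
            fix a1 b1 assume h2: "[Elt a g1, Elt a h1] = a1 @ b1" "a1 \<noteq> []" "b1 \<noteq> []" "u' = p @ a1" "u = b1 @ q"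
            then have "b1 = [Elt a h1]" using two_split by metis
            then show False using h2(5) hdu by simp
          qed
        next
          case (conj z c p q)
          let ?e = "elt \<Gamma> (tgt \<Gamma> z) (emb \<Gamma> (rev \<Gamma> z) c)"
          let ?pat = "[Edge z] @ ?e @ [Edge (rev \<Gamma> z)]"
          have stp2: "\<And>p' q'. britton_step \<Gamma> (p' @ ?pat @ q') (p' @ elt \<Gamma> (src \<Gamma> z) (emb \<Gamma> z c) @ q')"
            using britton_step.conj[OF conj(3,4)] by simp
          have "p @ ?pat @ q = u' @ u" using conj(1) by simp
          from straddle[OF this] show False
          proof (elim disjE exE conjE)
            fix q1 assume "u' = p @ ?pat @ q1"
            then show False using ru' stp2 unfolding britton_reduced_def by metis
          next
            fix p1 assume "u = p1 @ ?pat @ q"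
            then show False using ru stp2 unfolding britton_reduced_def by metis
          next
            fix a1 b1 assume h2: "?pat = a1 @ b1" "a1 \<noteq> []" "b1 \<noteq> []" "u' = p @ a1" "u = b1 @ q"
            have hb: "hd b1 = Edge (y (m+1))" using hdu h2(3,5) by simp
            then have ex: "\<exists>z' r. b1 = Edge z' # r" using h2(3) by (cases b1) auto
            have le: "length ?e \<le> 1" by (simp add: elt_def)
            note ab0 = pat3_split2[OF h2(1)[symmetric] h2(2,3) allElt_elt le ex]
            have ab: "a1 = [Edge z] @ ?e" "b1 = [Edge (rev \<Gamma> z)]" using ab0 by simp_all
            have rz: "rev \<Gamma> z = y (m+1)" using hb ab(2) by simp
            have "W = (u @ p) @ [Edge z] @ ?e" using W h2(4) ab(1) by simp
            with tlW have eqs: "s @ [Edge (y m)] @ elt \<Gamma> (tgt \<Gamma> (y m)) (g m) = (u @ p) @ [Edge z] @ ?e"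
              by simp
            have le2: "length (elt \<Gamma> (tgt \<Gamma> (y m)) (g m)) \<le> 1" by (simp add: elt_def)
            have tm: "y m = z \<and> elt \<Gamma> (tgt \<Gamma> (y m)) (g m) = ?e"
              using tail_match[OF eqs allElt_elt allElt_elt le2 le] .
            have m1: "1 \<le> m" using km by simp
            have "rev \<Gamma> (y m) = y (m+1)" using tm rz by simp
            from w_pinch[OF m1 this] obtain P0 Q0 where
              "fact_word \<Gamma> n y g = P0 @ ?pat @ Q0" using tm by auto
            then show False using red stp2 unfolding britton_reduced_def by metis
          qed
        qed
      qed
    qed
  qed
qed

end


context LL begin

lemma valid_seg: assumes "1 \<le> i" "j \<le> n" shows "valid_word \<Gamma> (seg i j)"
  unfolding valid_word_def
proof
  fix l assume "l \<in> set (seg i j)"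
  then obtain k where k: "i \<le> k" "k < Suc j" and l: "l = Edge (y k) \<or> l \<in> set (elt \<Gamma> (tgt \<Gamma> (y k)) (g k))"
    by (auto simp: seg_word_def)
  have ye: "y k \<in> edges \<Gamma>" using yE[of k] k assms by simp
  have gc: "g k \<in> carrier (vgrp \<Gamma> (tgt \<Gamma> (y k)))" using gC[of k] k assms by simp
  show "valid_letter \<Gamma> l" using l ye gc E(4)[OF ye] by (auto simp: valid_letter_def elt_def split: if_splits)
qed

lemma main:
  assumes "(britton_step \<Gamma>)\<^sup>*\<^sup>* (seg (m+1) n @ elt \<Gamma> (src \<Gamma> (y 1)) (g 0) @ seg 1 m) W"
    "britton_reduced \<Gamma> W"
  shows "cyc_britton_reduced \<Gamma> W \<and> fg_conjugate \<Gamma> (fact_word \<Gamma> n y g) W"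
proof
  show "cyc_britton_reduced \<Gamma> W" using final[OF reach_st[OF assms(1) init_st] assms(2)] .
next
  let ?Q = "seg (m+1) n"
  let ?P = "elt \<Gamma> (src \<Gamma> (y 1)) (g 0) @ seg 1 m"
  have vQ: "valid_word \<Gamma> ?Q" by (rule valid_seg) auto
  note I = invw_ok[OF gog vQ]
  have w: "fact_word \<Gamma> n y g = ?P @ ?Q" using w_eq by simp
  have "fg_eq \<Gamma> ((?Q @ ?P) @ (?Q @ invw \<Gamma> ?Q) @ []) ((?Q @ ?P) @ [] @ [])"
    using fg_eq_ctx[OF conjunct1[OF I]] .
  then have 1: "fg_eq \<Gamma> (?Q @ fact_word \<Gamma> n y g @ invw \<Gamma> ?Q) (?Q @ ?P)" using w by simp
  have 2: "fg_eq \<Gamma> (?Q @ ?P) W" using steps_fg[OF assms(1)] by simp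
  show "fg_conjugate \<Gamma> (fact_word \<Gamma> n y g) W"
    unfolding fg_conjugate_def
    using vQ I fg_eq.trans[OF 1 2] by blast
qed

end

theorem lemma4p2:
  fixes \<Gamma> :: "('v, 'e, 'g, 'h) gog" and n :: nat and y :: "nat \<Rightarrow> 'e" and g :: "nat \<Rightarrow> 'g"
    and w_hat :: "('v, 'e, 'g) letter list"
  assumes "graph_of_groups \<Gamma>"
    and "is_factorization \<Gamma> n y g"
    and "n \<ge> 1"
    and "britton_reduced \<Gamma> (fact_word \<Gamma> n y g)"
    and "(britton_step \<Gamma>)\<^sup>*\<^sup>*
           (seg_word \<Gamma> y g (n div 2 + 1) n @ elt \<Gamma> (src \<Gamma> (y 1)) (g 0) @ seg_word \<Gamma> y g 1 (n div 2))
           w_hat"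
    and "britton_reduced \<Gamma> w_hat"
  shows "cyc_britton_reduced \<Gamma> w_hat \<and> fg_conjugate \<Gamma> (fact_word \<Gamma> n y g) w_hat"
proof -
  interpret LL \<Gamma> n y g using assms(1,2,4) by unfold_locales
  show ?thesis using main assms(5,6) by simp
qed


end
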